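(* Let $G$ be a graph, $\ell\ge 1$, and let $B\subseteq V(G)$ be an $(\ell-1)$-edge-leaky forcing set of $G$. If $L$ is a set of $k\ge \ell$ edge leaks, then $|L- B^{[\infty]}_L|\le k-\ell$, where $L-S=\{xy\in L: x\notin S \text{ and } y\notin S\}$ for $S\subseteq V(G)$.
   Context: All graphs are finite, simple and undirected. Zero forcing: a blue vertex $u$ with exactly one white neighbor $w$ may force $w$ (color it blue), written $u\to w$. An edge leak is an edge $xy\in E(G)$ across which no force may be performed (neither $x\to y$ nor $y\to x$). $B$ is an $\ell$-edge-leaky forcing set if for every set $L$ of at most $\ell$ edge leaks, exhaustively applying the forcing rule from initial blue set $B$ without forcing across edges of $L$ colors all of $V(G)$ blue (a $0$-edge-leaky forcing set is a zero forcing set). For a set $L$ of edge leaks, $B^{[\infty]}_L$ denotes the set of blue vertices obtained from $B$ after the forcing rule (respecting the leaks $L$) has been applied exhaustively; this set does not depend on the order of forces. *)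

theory Defs
  imports Main
begin

definition simple_graph :: "'a set \<Rightarrow> 'a set set \<Rightarrow> bool" where
  "simple_graph V E \<longleftrightarrow> finite V \<and> (\<forall>e\<in>E. e \<subseteq> V \<and> card e = 2)"

inductive_set leaky_closure :: "'a set set \<Rightarrow> 'a set \<Rightarrow> 'a set set \<Rightarrow> 'a set"
  for E :: "'a set set" and B :: "'a set" and L :: "'a set set" where
  init: "b \<in> B \<Longrightarrow> b \<in> leaky_closure E B L"
| force: "\<lbrakk> u \<in> leaky_closure E B L; {u, w} \<in> E; {u, w} \<notin> L;
            \<And>v. \<lbrakk> {u, v} \<in> E; v \<noteq> w \<rbrakk> \<Longrightarrow> v \<in> leaky_closure E B L \<rbrakk>
          \<Longrightarrow> w \<in> leaky_closure E B L"

definition edge_leaky_forcing_set :: "'a set \<Rightarrow> 'a set set \<Rightarrow> nat \<Rightarrow> 'a set \<Rightarrow> bool" where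
  "edge_leaky_forcing_set V E l B \<longleftrightarrow> B \<subseteq> V \<and>
     (\<forall>L. L \<subseteq> E \<and> card L \<le> l \<longrightarrow> leaky_closure E B L = V)"

definition leaks_outside :: "'a set set \<Rightarrow> 'a set \<Rightarrow> 'a set set" where
  "leaks_outside L S = {e \<in> L. e \<inter> S = {}}"

end

theory Submission
  imports Defs
begin

lemma mono_closure:
  assumes "x \<in> leaky_closure E B L'"
    and "\<And>e. e \<in> L \<Longrightarrow> e \<notin> L' \<Longrightarrow> e \<inter> leaky_closure E B L = {}"
  shows "x \<in> leaky_closure E B L"
  using assms(1)
proof (induction rule: leaky_closure.induct)
  case (init b) then show ?case by (rule leaky_closure.init)
next
  case (force u w)
  have "{u, w} \<notin> L"
  proof
    assume "{u,w} \<in> L"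
    then have "{u,w} \<inter> leaky_closure E B L = {}" using force(3) assms(2) by blast
    then show False using force.IH by simp
  qed
  then show ?case
  proof (rule leaky_closure.force[of u, rotated 2])
    show "u \<in> leaky_closure E B L" using force.IH by simp
    show "{u, w} \<in> E" using force.hyps by simp
    fix v assume "{u, v} \<in> E" "v \<noteq> w"
    then show "v \<in> leaky_closure E B L" using force.IH(2) by blast
  qed
qed

theorem lemma2p2:
  fixes V :: "'a set" and E :: "'a set set" and B :: "'a set" and L :: "'a set set"
    and l k :: nat
  assumes "simple_graph V E"
    and "l \<ge> 1"
    and "edge_leaky_forcing_set V E (l - 1) B"
    and "L \<subseteq> E" and "card L = k" and "k \<ge> l"
  shows "card (leaks_outside L (leaky_closure E B L)) \<le> k - l"
proof -
  define S where "S = leaky_closure E B L"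
  define R where "R = leaks_outside L S"
  have fin: "finite L" using assms(2,5,6) card.infinite by fastforce
  have RL: "R \<subseteq> L" unfolding R_def leaks_outside_def by auto
  show ?thesis
  proof (cases "card (L - R) \<le> l - 1")
    case True
    have "leaky_closure E B (L - R) = V"
    proof -
      have "L - R \<subseteq> E" using assms(4) by auto
      then show ?thesis using assms(3) True unfolding edge_leaky_forcing_set_def by blast
    qed
    moreover have "leaky_closure E B (L - R) \<subseteq> S"
    proof
      fix x assume "x \<in> leaky_closure E B (L - R)"
      then show "x \<in> S" unfolding S_def
        by (rule mono_closure) (simp add: R_def leaks_outside_def S_def)
    qed
    ultimately have SV: "V \<subseteq> S" by auto
    have "R = {}"
    proof (rule ccontr)
      assume "R \<noteq> {}"
      then obtain e where e: "e \<in> R" by auto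
      then have "e \<in> E" "e \<inter> S = {}" using RL assms(4)
        unfolding R_def leaks_outside_def by auto
      then have "e \<subseteq> V" "card e = 2" using assms(1) unfolding simple_graph_def by auto
      then have "e \<noteq> {}" by auto
      with \<open>e \<subseteq> V\<close> SV \<open>e \<inter> S = {}\<close> show False by blast
    qed
    then show ?thesis unfolding R_def S_def by simp
  next
    case False
    have "card (L - R) = k - card R" using card_Diff_subset[OF finite_subset[OF RL fin] RL] assms(5) by simp
    with False have "card R \<le> k - l" using assms(2) card_mono[OF fin RL] assms(5) by linarith
    then show ?thesis unfolding R_def S_def by simp
  qed
qed

end
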